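(* Let $\{p_\eta:\eta>0\}$ be a minimal exponential family of densities $p_\eta(x)=h(x)e^{\eta T(x)-A(\eta)}$, with $(0,\infty)$ contained in the interior of the natural parameter space. Let $\eta_{\mathrm{test}}>0$ be a random variable, and let $Y$ be a random variable whose conditional distribution given $\eta_{\mathrm{test}}$ is $p_{\eta_{\mathrm{test}}}$. Assume $\mathbb{E}\,T(Y)$ exists and is finite, and $\mathbb{E}|\log h(Y)|<\infty$. Then $\eta^*=(A')^{-1}\big(\mathbb{E}\,A'(\eta_{\mathrm{test}})\big)$ is well defined (a unique $\eta^*>0$ with $A'(\eta^* )=\mathbb{E}A'(\eta_{\mathrm{test}})$ exists), and $\eta^*$ is the unique minimizer over $\eta>0$ of the expected logarithmic loss $\mathbb{E}\,\ell(p_\eta,p_{\eta_{\mathrm{test}}})=\mathbb{E}[-\log p_\eta(Y)]$.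
   Context: A single-parameter exponential family is minimal if $T$ is not almost everywhere constant. Logarithmic loss of forecast density $f$ at outcome $y$: $-\log f(y)$. *)

theory Defs
  imports "HOL-Probability.Probability"
begin

definition ef_A :: "'a measure \<Rightarrow> ('a \<Rightarrow> real) \<Rightarrow> ('a \<Rightarrow> real) \<Rightarrow> real \<Rightarrow> real" where
  "ef_A \<mu> h T \<eta> = ln (\<integral>x. h x * exp (\<eta> * T x) \<partial>\<mu>)"

definition ef_density :: "'a measure \<Rightarrow> ('a \<Rightarrow> real) \<Rightarrow> ('a \<Rightarrow> real) \<Rightarrow> real \<Rightarrow> 'a \<Rightarrow> real" where
  "ef_density \<mu> h T \<eta> x = h x * exp (\<eta> * T x - ef_A \<mu> h T \<eta>)"

definition natural_param_space :: "'a measure \<Rightarrow> ('a \<Rightarrow> real) \<Rightarrow> ('a \<Rightarrow> real) \<Rightarrow> real set" where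
  "natural_param_space \<mu> h T = {\<eta>. integrable \<mu> (\<lambda>x. h x * exp (\<eta> * T x))}"

definition minimal_ef :: "'a measure \<Rightarrow> ('a \<Rightarrow> real) \<Rightarrow> ('a \<Rightarrow> real) \<Rightarrow> bool" where
  "minimal_ef \<mu> h T \<longleftrightarrow> \<not> (\<exists>c. AE x in density \<mu> (\<lambda>x. ennreal (h x)). T x = c)"

definition log_loss :: "('a \<Rightarrow> real) \<Rightarrow> 'a \<Rightarrow> real" where
  "log_loss f y = - ln (f y)"

end

theory Submission
  imports Defs
begin


lemma exp_quad_bound:
  fixes u :: real
  shows "\<bar>exp u - 1 - u\<bar> \<le> u^2 * exp \<bar>u\<bar>"
proof (cases "u = 0")
  case True then show ?thesis by simp
next
  case False
  from Maclaurin_exp_lt[OF False, of 2] obtain t where t: "\<bar>t\<bar> < \<bar>u\<bar>"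
    "exp u = (\<Sum>m<2. (u ^ m) / fact m) + (exp t / fact 2) * u ^ 2" by auto
  have e: "exp u - 1 - u = exp t / 2 * u^2" using t(2) by (simp add: eval_nat_numeral)
  have "exp t \<le> exp \<bar>u\<bar>" using t(1) by simp
  then have "exp t / 2 \<le> exp \<bar>u\<bar>" using exp_gt_zero[of t] by linarith
  from mult_right_mono[OF this zero_le_power2[of u]]
  have "exp t / 2 * u^2 \<le> u^2 * exp \<bar>u\<bar>" by (simp add: mult.commute)
  moreover have "exp t / 2 * u^2 \<ge> 0" by simp
  ultimately show ?thesis unfolding e by (simp only: abs_of_nonneg)
qed

lemma exp_eq_one_plus:
  fixes u :: real
  assumes "exp u = 1 + u" shows "u = 0"
proof (rule ccontr)
  assume "u \<noteq> 0"
  from Maclaurin_exp_lt[OF this, of 2] obtain t where t: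
    "exp u = (\<Sum>m<2. (u ^ m) / fact m) + (exp t / fact 2) * u ^ 2" by auto
  then have "exp u = 1 + u + exp t / 2 * u^2" by (simp add: eval_nat_numeral)
  moreover have "exp t / 2 * u^2 > 0" using \<open>u \<noteq> 0\<close> by simp
  ultimately show False using assms by simp
qed

lemma abs_le_exp: "(d::real) > 0 \<Longrightarrow> \<bar>x\<bar> \<le> exp (d * \<bar>x\<bar>) / d"
proof -
  assume d: "d > 0"
  have "d * \<bar>x\<bar> \<le> exp (d * \<bar>x\<bar>)"
    using exp_ge_add_one_self[of "d * \<bar>x\<bar>"] by linarith
  then show ?thesis using d by (simp add: field_simps)
qed

lemma sq_le_exp: "(d::real) > 0 \<Longrightarrow> x^2 \<le> 2 * exp (d * \<bar>x\<bar>) / d^2"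
proof -
  assume d: "d > 0"
  have "(d * \<bar>x\<bar>)^2 / 2 \<le> exp (d * \<bar>x\<bar>)"
  proof -
    have y: "d * \<bar>x\<bar> \<ge> 0" using d by simp
    show ?thesis using exp_lower_Taylor_quadratic[OF y] y by linarith
  qed
  then have "d^2 * x^2 \<le> 2 * exp (d * \<bar>x\<bar>)" by (simp add: power_mult_distrib)
  then show ?thesis using d by (simp add: field_simps)
qed

lemma exp_abs_le: "exp (d * \<bar>x\<bar>) \<le> exp (d * x) + exp (- d * x)" for d x :: real
proof -
  have "0 < exp (d * x)" "0 < exp (- d * x)" by simp_all
  then show ?thesis by (cases "x \<ge> 0") (simp_all add: abs_of_nonneg abs_of_neg)
qed

lemma deriv_from_bound:
  fixes f :: "real \<Rightarrow> real"
  assumes d: "d > 0" and b: "\<And>t. \<bar>t\<bar> \<le> d \<Longrightarrow> \<bar>f (x + t) - f x - t * D\<bar> \<le> C * t^2"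
  shows "(f has_real_derivative D) (at x)"
  unfolding has_field_derivative_iff
proof (rule tendstoI)
  fix e :: real assume e: "e > 0"
  define r where "r = min d (e / (\<bar>C\<bar> + 1))"
  have r: "r > 0" using d e by (simp add: r_def)
  show "\<forall>\<^sub>F y in at x. dist ((f y - f x) / (y - x)) D < e"
    unfolding eventually_at
  proof (intro exI[of _ r] conjI ballI impI)
    show "r > 0" by fact
    fix y assume y: "y \<noteq> x \<and> dist y x < r"
    define t where "t = y - x"
    have t0: "t \<noteq> 0" and tr: "\<bar>t\<bar> < r" using y by (auto simp: t_def dist_real_def)
    have "\<bar>f (x + t) - f x - t * D\<bar> \<le> C * t^2" using b tr by (simp add: r_def)
    also have "\<dots> \<le> \<bar>C\<bar> * \<bar>t\<bar> * \<bar>t\<bar>" by (simp add: power2_eq_square abs_mult[symmetric] )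
    finally have 1: "\<bar>f (x + t) - f x - t * D\<bar> \<le> \<bar>C\<bar> * \<bar>t\<bar> * \<bar>t\<bar>" .
    have "(f y - f x) / (y - x) - D = (f (x + t) - f x - t * D) / t"
      using t0 by (simp add: t_def field_simps)
    then have "dist ((f y - f x) / (y - x)) D = \<bar>f (x + t) - f x - t * D\<bar> / \<bar>t\<bar>"
      by (simp add: dist_real_def abs_divide)
    also have "\<dots> \<le> \<bar>C\<bar> * \<bar>t\<bar>" using 1 t0 by (simp add: divide_le_eq)
    also have "\<dots> < e"
    proof -
      have "\<bar>t\<bar> < e / (\<bar>C\<bar> + 1)" using tr by (simp add: r_def)
      then have "(\<bar>C\<bar> + 1) * \<bar>t\<bar> < e" by (simp add: field_simps)
      moreover have "\<bar>C\<bar> * \<bar>t\<bar> \<le> (\<bar>C\<bar> + 1) * \<bar>t\<bar>" by (simp add: mult_right_mono)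
      ultimately show ?thesis by linarith
    qed
    finally show "dist ((f y - f x) / (y - x)) D < e" .
  qed
qed


lemma abs_mul_bound:
  fixes d H t \<eta> :: real
  assumes d: "d > 0" and H: "H \<ge> 0"
  shows "\<bar>t\<bar> * (H * exp (\<eta> * t)) \<le> (H * exp ((\<eta> + d) * t) + H * exp ((\<eta> - d) * t)) / d"
proof -
  have "\<bar>t\<bar> \<le> exp (d * \<bar>t\<bar>) / d" by (rule abs_le_exp[OF d])
  also have "\<dots> \<le> (exp (d * t) + exp (- d * t)) / d"
    using exp_abs_le[of d t] d by (simp add: divide_right_mono)
  finally have 1: "\<bar>t\<bar> \<le> (exp (d * t) + exp (- d * t)) / d" .
  have "\<bar>t\<bar> * (H * exp (\<eta> * t)) \<le> (exp (d * t) + exp (- d * t)) / d * (H * exp (\<eta> * t))"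
    using mult_right_mono[OF 1, of "H * exp (\<eta> * t)"] H by simp
  also have "\<dots> = (H * exp ((\<eta> + d) * t) + H * exp ((\<eta> - d) * t)) / d"
  proof -
    have "exp ((\<eta> + d) * t) = exp (d * t) * exp (\<eta> * t)" by (simp add: exp_add[symmetric] algebra_simps)
    moreover have "exp ((\<eta> - d) * t) = exp (- d * t) * exp (\<eta> * t)" by (simp add: exp_add[symmetric] algebra_simps)
    ultimately show ?thesis by (simp add: field_simps)
  qed
  finally show ?thesis .
qed

lemma quad_bound:
  fixes d H t \<eta> s :: real
  assumes d: "d > 0" and H: "H \<ge> 0" and s: "\<bar>s\<bar> \<le> d"
  shows "\<bar>H * exp (\<eta> * t) * (exp (s * t) - 1 - s * t)\<bar>
    \<le> s^2 * ((2 / d^2) * (H * exp ((\<eta> + 2 * d) * t) + H * exp ((\<eta> - 2 * d) * t)))"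
proof -
  have a: "\<bar>exp (s * t) - 1 - s * t\<bar> \<le> (s * t)^2 * exp \<bar>s * t\<bar>" by (rule exp_quad_bound)
  have "\<bar>s * t\<bar> \<le> d * \<bar>t\<bar>" using s by (simp add: abs_mult mult_right_mono)
  then have b: "exp \<bar>s * t\<bar> \<le> exp (d * \<bar>t\<bar>)" by simp
  have c: "t^2 \<le> 2 * exp (d * \<bar>t\<bar>) / d^2" by (rule sq_le_exp[OF d])
  have "(s * t)^2 * exp \<bar>s * t\<bar> \<le> s^2 * t^2 * exp (d * \<bar>t\<bar>)"
    using b by (simp add: power_mult_distrib mult_left_mono)
  also have "\<dots> \<le> s^2 * (2 * exp (d * \<bar>t\<bar>) / d^2) * exp (d * \<bar>t\<bar>)"
    using c by (intro mult_right_mono mult_left_mono) auto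
  also have "\<dots> = s^2 * (2 / d^2) * exp ((2 * d) * \<bar>t\<bar>)"
    by (simp add: exp_add[symmetric] algebra_simps)
  also have "\<dots> \<le> s^2 * (2 / d^2) * (exp ((2 * d) * t) + exp (- (2 * d) * t))"
    using exp_abs_le[of "2 * d" t] by (intro mult_left_mono) auto
  finally have 1: "\<bar>exp (s * t) - 1 - s * t\<bar> \<le> s^2 * (2 / d^2) * (exp ((2 * d) * t) + exp (- (2 * d) * t))"
    using a by linarith
  have "\<bar>H * exp (\<eta> * t) * (exp (s * t) - 1 - s * t)\<bar> = (H * exp (\<eta> * t)) * \<bar>exp (s * t) - 1 - s * t\<bar>"
    using H by (simp add: abs_mult)
  also have "\<dots> \<le> (H * exp (\<eta> * t)) * (s^2 * (2 / d^2) * (exp ((2 * d) * t) + exp (- (2 * d) * t)))"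
    using 1 H by (intro mult_left_mono) auto
  also have "\<dots> = s^2 * ((2 / d^2) * (H * exp ((\<eta> + 2 * d) * t) + H * exp ((\<eta> - 2 * d) * t)))"
  proof -
    have "exp ((\<eta> + 2 * d) * t) = exp ((2 * d) * t) * exp (\<eta> * t)" by (simp add: exp_add[symmetric] algebra_simps)
    moreover have "exp ((\<eta> - 2 * d) * t) = exp (- (2 * d) * t) * exp (\<eta> * t)" by (simp add: exp_add[symmetric] algebra_simps)
    ultimately show ?thesis by (simp add: algebra_simps)
  qed
  finally show ?thesis .
qed

locale ef =
  fixes \<mu> :: "'a measure" and h T :: "'a \<Rightarrow> real"
  assumes h_meas[measurable]: "h \<in> borel_measurable \<mu>"
    and h_nonneg: "\<And>x. x \<in> space \<mu> \<Longrightarrow> h x \<ge> 0"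
    and T_meas[measurable]: "T \<in> borel_measurable \<mu>"
    and minimal: "minimal_ef \<mu> h T"
    and intg: "\<And>\<eta>. \<eta> > 0 \<Longrightarrow> integrable \<mu> (\<lambda>x. h x * exp (\<eta> * T x))"
begin

definition Z where "Z \<eta> = (\<integral>x. h x * exp (\<eta> * T x) \<partial>\<mu>)"
definition M where "M \<eta> = (\<integral>x. T x * (h x * exp (\<eta> * T x)) \<partial>\<mu>)"

lemma A_eq: "ef_A \<mu> h T \<eta> = ln (Z \<eta>)" by (simp add: ef_A_def Z_def)

lemma Z_pos: assumes "\<eta> > 0" shows "Z \<eta> > 0"
proof -
  have nn: "AE x in \<mu>. 0 \<le> h x * exp (\<eta> * T x)" using h_nonneg by (auto intro!: AE_I2)
  have "Z \<eta> \<ge> 0" unfolding Z_def using nn by (rule integral_nonneg_AE)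
  moreover have "Z \<eta> \<noteq> 0"
  proof
    assume "Z \<eta> = 0"
    then have "AE x in \<mu>. h x * exp (\<eta> * T x) = 0"
      using integral_nonneg_eq_0_iff_AE[OF intg[OF assms] nn] by (simp add: Z_def)
    then have "AE x in \<mu>. 0 < h x \<longrightarrow> T x = 0" by eventually_elim simp
    then have "AE x in density \<mu> (\<lambda>x. ennreal (h x)). T x = 0" by (simp add: AE_density)
    with minimal show False unfolding minimal_ef_def by blast
  qed
  ultimately show ?thesis by simp
qed

lemma intT: assumes "\<eta> > 0" shows "integrable \<mu> (\<lambda>x. T x * (h x * exp (\<eta> * T x)))"
proof -
  define d where "d = \<eta> / 2"
  have d: "d > 0" "\<eta> - d > 0" using assms by (auto simp: d_def)
  have int: "integrable \<mu> (\<lambda>x. (h x * exp ((\<eta> + d) * T x) + h x * exp ((\<eta> - d) * T x)) / d)"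
    using intg d assms by (intro integrable_divide_zero integrable_add) auto
  have bnd: "AE x in \<mu>. norm (T x * (h x * exp (\<eta> * T x)))
      \<le> norm ((h x * exp ((\<eta> + d) * T x) + h x * exp ((\<eta> - d) * T x)) / d)"
  proof (rule AE_I2)
    fix x assume x: "x \<in> space \<mu>"
    have "norm (T x * (h x * exp (\<eta> * T x))) = \<bar>T x\<bar> * (h x * exp (\<eta> * T x))"
      using h_nonneg[OF x] by (simp add: abs_mult)
    also have "\<dots> \<le> (h x * exp ((\<eta> + d) * T x) + h x * exp ((\<eta> - d) * T x)) / d"
      by (rule abs_mul_bound[OF d(1) h_nonneg[OF x]])
    also have "\<dots> \<le> norm ((h x * exp ((\<eta> + d) * T x) + h x * exp ((\<eta> - d) * T x)) / d)" by (metis real_norm_def abs_ge_self)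
    finally show "norm (T x * (h x * exp (\<eta> * T x)))
      \<le> norm ((h x * exp ((\<eta> + d) * T x) + h x * exp ((\<eta> - d) * T x)) / d)" .
  qed
  have meas: "(\<lambda>x. T x * (h x * exp (\<eta> * T x))) \<in> borel_measurable \<mu>" by measurable
  show ?thesis by (rule Bochner_Integration.integrable_bound[OF int meas bnd])
qed

lemma Z_deriv: assumes "\<eta> > 0" shows "(Z has_real_derivative M \<eta>) (at \<eta>)"
proof -
  define d where "d = \<eta> / 4"
  have d: "d > 0" "\<eta> - 2 * d > 0" "\<eta> + 2 * d > 0" using assms by (auto simp: d_def)
  define C where "C = (2 / d^2) * (Z (\<eta> + 2 * d) + Z (\<eta> - 2 * d))"
  show ?thesis
  proof (rule deriv_from_bound[OF d(1)])
    fix s :: real assume s: "\<bar>s\<bar> \<le> d"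
    have es: "\<eta> + s > 0" using s d assms unfolding d_def by linarith
    define f where "f x = h x * exp (\<eta> * T x) * (exp (s * T x) - 1 - s * T x)" for x
    have feq: "f x = h x * exp ((\<eta> + s) * T x) - h x * exp (\<eta> * T x) - s * (T x * (h x * exp (\<eta> * T x)))" for x
      by (simp add: f_def exp_add[symmetric] algebra_simps)
    have fint: "integrable \<mu> f" unfolding feq
      using intg[OF es] intg[OF assms] intT[OF assms] by auto
    have "Z (\<eta> + s) - Z \<eta> - s * M \<eta> = (\<integral>x. f x \<partial>\<mu>)"
      unfolding feq Z_def M_def
      using intg[OF es] intg[OF assms] intT[OF assms] by simp
    then have "\<bar>Z (\<eta> + s) - Z \<eta> - s * M \<eta>\<bar> = norm (\<integral>x. f x \<partial>\<mu>)" by simp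
    also have "\<dots> \<le> (\<integral>x. norm (f x) \<partial>\<mu>)" by (rule integral_norm_bound)
    also have "\<dots> \<le> (\<integral>x. s^2 * ((2 / d^2) * (h x * exp ((\<eta> + 2 * d) * T x) + h x * exp ((\<eta> - 2 * d) * T x))) \<partial>\<mu>)"
      using integrable_norm[OF fint] intg[OF d(3)] intg[OF d(2)]
    proof (intro integral_mono)
      fix x assume "x \<in> space \<mu>"
      from quad_bound[OF d(1) h_nonneg[OF this] s, of \<eta> "T x"]
      show "norm (f x) \<le> s^2 * ((2 / d^2) * (h x * exp ((\<eta> + 2 * d) * T x) + h x * exp ((\<eta> - 2 * d) * T x)))"
        by (simp add: f_def)
    qed auto
    also have "\<dots> = C * s^2"
      unfolding C_def Z_def using intg[OF d(3)] intg[OF d(2)] by simp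
    finally show "\<bar>Z (\<eta> + s) - Z \<eta> - s * M \<eta>\<bar> \<le> C * s^2" .
  qed
qed

lemma A_fun: "ef_A \<mu> h T = (\<lambda>\<eta>. ln (Z \<eta>))" by (simp add: fun_eq_iff A_eq)

lemma A_deriv: assumes "\<eta> > 0" shows "(ef_A \<mu> h T has_real_derivative M \<eta> / Z \<eta>) (at \<eta>)"
  unfolding A_fun
  using DERIV_chain2[OF DERIV_ln_divide[OF Z_pos[OF assms]] Z_deriv[OF assms]] by simp

lemma deriv_A: assumes "\<eta> > 0" shows "deriv (ef_A \<mu> h T) \<eta> = M \<eta> / Z \<eta>"
  using A_deriv[OF assms] by (rule DERIV_imp_deriv)

lemma subgrad:
  assumes e: "\<eta> > 0" and e': "\<eta>' > 0" and ne: "\<eta> \<noteq> \<eta>'"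
  shows "ef_A \<mu> h T \<eta>' > ef_A \<mu> h T \<eta> + (\<eta>' - \<eta>) * (M \<eta> / Z \<eta>)"
proof -
  define m where "m = M \<eta> / Z \<eta>"
  define s where "s = \<eta>' - \<eta>"
  have s0: "s \<noteq> 0" using ne by (simp add: s_def)
  have Zp: "Z \<eta> > 0" "Z \<eta>' > 0" using Z_pos e e' by auto
  define g where "g x = exp (- s * m) * (h x * exp (\<eta>' * T x)) - (1 - s * m) * (h x * exp (\<eta> * T x))
      - s * (T x * (h x * exp (\<eta> * T x)))" for x
  have gform: "g x = h x * exp (\<eta> * T x) * (exp (s * (T x - m)) - 1 - s * (T x - m))" for x
  proof -
    have ea: "exp (- s * m) * (h x * exp (\<eta>' * T x)) = h x * exp (\<eta> * T x) * exp (s * (T x - m))"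
      by (simp add: exp_add[symmetric] s_def algebra_simps)
    show ?thesis unfolding g_def ea by (simp add: algebra_simps)
  qed
  have gint: "integrable \<mu> g" unfolding g_def using intg[OF e] intg[OF e'] intT[OF e] by auto
  have gnn: "AE x in \<mu>. 0 \<le> g x"
  proof (rule AE_I2)
    fix x assume x: "x \<in> space \<mu>"
    have "0 \<le> exp (s * (T x - m)) - 1 - s * (T x - m)" using exp_ge_add_one_self[of "s * (T x - m)"] by linarith
    then show "0 \<le> g x" unfolding gform using h_nonneg[OF x] by simp
  qed
  have gI: "(\<integral>x. g x \<partial>\<mu>) = exp (- s * m) * Z \<eta>' - Z \<eta>"
  proof -
    have "(\<integral>x. g x \<partial>\<mu>) = exp (- s * m) * Z \<eta>' - (1 - s * m) * Z \<eta> - s * M \<eta>"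
      unfolding g_def Z_def M_def using intg[OF e] intg[OF e'] intT[OF e] by simp
    also have "\<dots> = exp (- s * m) * Z \<eta>' - Z \<eta>" using Zp by (simp add: m_def field_simps)
    finally show ?thesis .
  qed
  have "(\<integral>x. g x \<partial>\<mu>) \<noteq> 0"
  proof
    assume "(\<integral>x. g x \<partial>\<mu>) = 0"
    then have "AE x in \<mu>. g x = 0" using integral_nonneg_eq_0_iff_AE[OF gint gnn] by simp
    then have "AE x in \<mu>. 0 < h x \<longrightarrow> T x = m"
    proof eventually_elim
      case (elim x)
      show ?case
      proof
        assume hx: "0 < h x"
        then have "exp (s * (T x - m)) - 1 - s * (T x - m) = 0" using elim unfolding gform by simp
        then have "s * (T x - m) = 0" by (intro exp_eq_one_plus) simp
        then show "T x = m" using s0 by simp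
      qed
    qed
    then have "AE x in density \<mu> (\<lambda>x. ennreal (h x)). T x = m" by (simp add: AE_density)
    with minimal show False unfolding minimal_ef_def by blast
  qed
  moreover have "(\<integral>x. g x \<partial>\<mu>) \<ge> 0" using gnn by (rule integral_nonneg_AE)
  ultimately have "exp (- s * m) * Z \<eta>' - Z \<eta> > 0" using gI by linarith
  then have "Z \<eta> * exp (s * m) < Z \<eta>'"
    by (simp add: exp_minus field_simps)
  then have "ln (Z \<eta> * exp (s * m)) < ln (Z \<eta>')" using Zp by simp
  then have "ln (Z \<eta>) + s * m < ln (Z \<eta>')" using Zp by (simp add: ln_mult)
  then show ?thesis by (simp add: A_eq s_def m_def)
qed

definition F where "F B \<eta> = (\<integral>x. indicator B x * (h x * exp (\<eta> * T x)) \<partial>\<mu>)"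

lemma F_int: assumes "B \<in> sets \<mu>" "\<eta> > 0"
  shows "integrable \<mu> (\<lambda>x. indicator B x * (h x * exp (\<eta> * T x)))"
  using integrable_mult_indicator[OF assms(1) intg[OF assms(2)]] by simp

lemma F_convex: assumes B: "B \<in> sets \<mu>" shows "convex_on {0<..} (F B)"
proof (rule convex_onI)
  show "convex {0::real<..}" by (rule convex_real_interval)
  fix t x y :: real assume t: "t > 0" "t < 1" and xy: "x \<in> {0<..}" "y \<in> {0<..}"
  have xy': "(1 - t) * x + t * y > 0" using t xy by (simp add: add_pos_pos)
  have "F B ((1 - t) * x + t * y) \<le> (\<integral>z. (1 - t) * (indicator B z * (h z * exp (x * T z)))
      + t * (indicator B z * (h z * exp (y * T z))) \<partial>\<mu>)"
    unfolding F_def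
  proof (rule integral_mono)
    show "integrable \<mu> (\<lambda>z. indicator B z * (h z * exp (((1 - t) * x + t * y) * T z)))"
      using F_int[OF B xy'] .
    show "integrable \<mu> (\<lambda>z. (1 - t) * (indicator B z * (h z * exp (x * T z)))
      + t * (indicator B z * (h z * exp (y * T z))))" using F_int[OF B] xy by auto
    fix z assume z: "z \<in> space \<mu>"
    have c: "exp ((1 - t) *\<^sub>R (x * T z) + t *\<^sub>R (y * T z)) \<le> (1 - t) * exp (x * T z) + t * exp (y * T z)"
      using convex_onD[OF exp_convex, of t "x * T z" "y * T z"] t by simp
    have "exp (((1 - t) * x + t * y) * T z) \<le> (1 - t) * exp (x * T z) + t * exp (y * T z)"
      using c by (simp add: algebra_simps)
    then have "indicator B z * h z * exp (((1 - t) * x + t * y) * T z)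
        \<le> indicator B z * h z * ((1 - t) * exp (x * T z) + t * exp (y * T z))"
      using h_nonneg[OF z] by (intro mult_left_mono) auto
    then show "indicator B z * (h z * exp (((1 - t) * x + t * y) * T z))
        \<le> (1 - t) * (indicator B z * (h z * exp (x * T z))) + t * (indicator B z * (h z * exp (y * T z)))"
      by (simp add: algebra_simps)
  qed
  also have "\<dots> = (1 - t) * F B x + t * F B y"
    unfolding F_def using F_int[OF B] xy by simp
  finally show "F B ((1 - t) *\<^sub>R x + t *\<^sub>R y) \<le> (1 - t) * F B x + t * F B y" by simp
qed

lemma F_cont: assumes "B \<in> sets \<mu>" shows "continuous_on {0<..} (F B)"
  by (rule convex_on_continuous[OF _ F_convex[OF assms]]) simp

lemma Z_F: "Z \<eta> = F (space \<mu>) \<eta>"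
  unfolding Z_def F_def by (intro Bochner_Integration.integral_cong) auto

end


locale ef_mix = ef +
  fixes P :: "'w measure" and \<eta>t :: "'w \<Rightarrow> real" and Y :: "'w \<Rightarrow> 'a"
  assumes P: "prob_space P" and eta_meas[measurable]: "\<eta>t \<in> borel_measurable P"
    and eta_pos: "\<And>\<omega>. \<omega> \<in> space P \<Longrightarrow> \<eta>t \<omega> > 0"
    and Y_meas[measurable]: "Y \<in> measurable P \<mu>"
    and condY: "\<And>B. B \<in> sets \<mu> \<Longrightarrow> emeasure P (Y -` B \<inter> space P)
        = (\<integral>\<^sup>+\<omega>. emeasure (density \<mu> (\<lambda>x. ennreal (ef_density \<mu> h T (\<eta>t \<omega>) x))) B \<partial>P)"
begin

interpretation P: prob_space P by (rule P)

lemma p_eq: assumes "\<eta> > 0" shows "ef_density \<mu> h T \<eta> x = h x * exp (\<eta> * T x) / Z \<eta>"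
  using Z_pos[OF assms] by (simp add: ef_density_def A_eq exp_diff)

definition \<kappa> where "\<kappa> \<omega> = density \<mu> (\<lambda>x. ennreal (ef_density \<mu> h T (\<eta>t \<omega>) x))"

lemma dens_meas[measurable]: "(\<lambda>x. ef_density \<mu> h T \<eta> x) \<in> borel_measurable \<mu>"
  unfolding ef_density_def by measurable

lemma emeasure_\<kappa>: assumes w: "\<omega> \<in> space P" and B: "B \<in> sets \<mu>"
  shows "emeasure (\<kappa> \<omega>) B = ennreal (F B (\<eta>t \<omega>) / Z (\<eta>t \<omega>))"
proof -
  let ?e = "\<eta>t \<omega>"
  have e: "?e > 0" using eta_pos[OF w] .
  have "emeasure (\<kappa> \<omega>) B = (\<integral>\<^sup>+x. ennreal (ef_density \<mu> h T ?e x) * indicator B x \<partial>\<mu>)"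
    unfolding \<kappa>_def by (rule emeasure_density) (auto simp: B)
  also have "\<dots> = (\<integral>\<^sup>+x. ennreal (indicator B x * (h x * exp (?e * T x)) / Z ?e) \<partial>\<mu>)"
    by (intro nn_integral_cong) (auto simp: p_eq[OF e] split: split_indicator)
  also have "\<dots> = ennreal (\<integral>x. indicator B x * (h x * exp (?e * T x)) / Z ?e \<partial>\<mu>)"
    using F_int[OF B e] Z_pos[OF e] h_nonneg
    by (intro nn_integral_eq_integral) (auto intro!: AE_I2 simp: indicator_def)
  also have "\<dots> = ennreal (F B ?e / Z ?e)" by (simp add: F_def)
  finally show ?thesis .
qed

lemma sets_\<kappa>[simp]: "sets (\<kappa> \<omega>) = sets \<mu>" by (simp add: \<kappa>_def)
lemma space_\<kappa>[simp]: "space (\<kappa> \<omega>) = space \<mu>" by (simp add: \<kappa>_def)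

lemma \<kappa>_prob: assumes w: "\<omega> \<in> space P" shows "prob_space (\<kappa> \<omega>)"
proof
  have "emeasure (\<kappa> \<omega>) (space \<mu>) = ennreal (F (space \<mu>) (\<eta>t \<omega>) / Z (\<eta>t \<omega>))"
    by (rule emeasure_\<kappa>[OF w]) simp
  also have "\<dots> = 1" using Z_pos[OF eta_pos[OF w]] by (simp add: Z_F[symmetric])
  finally show "emeasure (\<kappa> \<omega>) (space (\<kappa> \<omega>)) = 1" by simp
qed

lemma F_comp_meas: assumes B: "B \<in> sets \<mu>" shows "(\<lambda>\<omega>. F B (\<eta>t \<omega>)) \<in> borel_measurable P"
proof -
  have 1: "\<eta>t \<in> measurable P (restrict_space borel {0<..})"
    by (rule measurable_restrict_space2) (auto simp: eta_pos)
  have 2: "F B \<in> borel_measurable (restrict_space borel {0<..})"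
    by (rule borel_measurable_continuous_on_restrict[OF F_cont[OF B]])
  show ?thesis using measurable_compose[OF 1 2] by (simp add: comp_def)
qed

lemma \<kappa>_meas: "\<kappa> \<in> measurable P (subprob_algebra \<mu>)"
proof (rule measurable_subprob_algebra)
  fix a assume "a \<in> space P"
  then show "subprob_space (\<kappa> a)" using \<kappa>_prob prob_space_imp_subprob_space by blast
next
  fix a show "sets (\<kappa> a) = sets \<mu>" by simp
next
  fix B assume B: "B \<in> sets \<mu>"
  have m1[measurable]: "(\<lambda>\<omega>. F B (\<eta>t \<omega>)) \<in> borel_measurable P" by (rule F_comp_meas[OF B])
  have m2[measurable]: "(\<lambda>\<omega>. F (space \<mu>) (\<eta>t \<omega>)) \<in> borel_measurable P" by (rule F_comp_meas) simp
  have "(\<lambda>\<omega>. ennreal (F B (\<eta>t \<omega>) / F (space \<mu>) (\<eta>t \<omega>))) \<in> borel_measurable P" by measurable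
  then show "(\<lambda>a. emeasure (\<kappa> a) B) \<in> borel_measurable P"
    by (subst measurable_cong[where g="\<lambda>\<omega>. ennreal (F B (\<eta>t \<omega>) / F (space \<mu>) (\<eta>t \<omega>))"])
       (auto simp: emeasure_\<kappa> B Z_F)
qed

lemma distr_eq: "distr P \<mu> Y = P \<bind> \<kappa>"
proof (rule measure_eqI)
  show "sets (distr P \<mu> Y) = sets (P \<bind> \<kappa>)"
    using P.not_empty by (simp add: sets_bind)
next
  fix A assume "A \<in> sets (distr P \<mu> Y)"
  then have A: "A \<in> sets \<mu>" by simp
  have "emeasure (distr P \<mu> Y) A = emeasure P (Y -` A \<inter> space P)" by (rule emeasure_distr[OF Y_meas A])
  also have "\<dots> = (\<integral>\<^sup>+\<omega>. emeasure (\<kappa> \<omega>) A \<partial>P)" unfolding \<kappa>_def by (rule condY[OF A])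
  also have "\<dots> = emeasure (P \<bind> \<kappa>) A" by (rule emeasure_bind[symmetric, OF P.not_empty \<kappa>_meas A])
  finally show "emeasure (distr P \<mu> Y) A = emeasure (P \<bind> \<kappa>) A" .
qed

lemma nn_mix: assumes g[measurable]: "g \<in> borel_measurable \<mu>"
  shows "(\<integral>\<^sup>+\<omega>. g (Y \<omega>) \<partial>P) = (\<integral>\<^sup>+\<omega>. (\<integral>\<^sup>+x. g x \<partial>\<kappa> \<omega>) \<partial>P)"
proof -
  have "(\<integral>\<^sup>+\<omega>. g (Y \<omega>) \<partial>P) = (\<integral>\<^sup>+x. g x \<partial>distr P \<mu> Y)"
    by (rule nn_integral_distr[symmetric]) auto
  also have "\<dots> = (\<integral>\<^sup>+\<omega>. (\<integral>\<^sup>+x. g x \<partial>\<kappa> \<omega>) \<partial>P)"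
    unfolding distr_eq by (rule nn_integral_bind[OF g \<kappa>_meas])
  finally show ?thesis .
qed

lemma AE_hY: "AE \<omega> in P. h (Y \<omega>) > 0"
proof -
  define B0 where "B0 = {x \<in> space \<mu>. h x \<le> 0}"
  have B0: "B0 \<in> sets \<mu>" unfolding B0_def by measurable
  have F0: "F B0 \<eta> = 0" for \<eta>
  proof -
    have "F B0 \<eta> = (\<integral>x. 0 \<partial>\<mu>)" unfolding F_def
      by (intro Bochner_Integration.integral_cong) (auto simp: B0_def indicator_def dest: h_nonneg)
    then show ?thesis by simp
  qed
  have "emeasure P (Y -` B0 \<inter> space P) = (\<integral>\<^sup>+\<omega>. emeasure (\<kappa> \<omega>) B0 \<partial>P)"
    unfolding \<kappa>_def by (rule condY[OF B0])
  also have "\<dots> = (\<integral>\<^sup>+\<omega>. 0 \<partial>P)"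
    by (intro nn_integral_cong) (simp add: emeasure_\<kappa> B0 F0)
  finally have 0: "emeasure P (Y -` B0 \<inter> space P) = 0" by simp
  show ?thesis
  proof (subst AE_iff_measurable[OF _ _])
    show "Y -` B0 \<inter> space P \<in> sets P" using B0 by measurable
    show "{\<omega> \<in> space P. \<not> 0 < h (Y \<omega>)} = Y -` B0 \<inter> space P"
      using measurable_space[OF Y_meas] by (auto simp: B0_def)
    show "emeasure P (Y -` B0 \<inter> space P) = 0" by (rule 0)
  qed
qed

definition G where "G g \<eta> = (\<integral>x. g x * (h x * exp (\<eta> * T x)) \<partial>\<mu>) / Z \<eta>"

lemma mix_int:
  assumes g[measurable]: "g \<in> borel_measurable \<mu>" and gnn: "\<And>x. x \<in> space \<mu> \<Longrightarrow> g x \<ge> 0"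
    and gY: "integrable P (\<lambda>\<omega>. g (Y \<omega>))"
    and gi: "\<And>\<eta>. \<eta> > 0 \<Longrightarrow> integrable \<mu> (\<lambda>x. g x * (h x * exp (\<eta> * T x)))"
  shows "integrable P (\<lambda>\<omega>. G g (\<eta>t \<omega>))" "(\<integral>\<omega>. g (Y \<omega>) \<partial>P) = (\<integral>\<omega>. G g (\<eta>t \<omega>) \<partial>P)"
proof -
  have Gnn: "G g \<eta> \<ge> 0" if "\<eta> > 0" for \<eta>
    unfolding G_def using Z_pos[OF that] gnn h_nonneg
    by (intro divide_nonneg_pos integral_nonneg_AE AE_I2) auto
  have inner: "(\<integral>\<^sup>+x. ennreal (g x) \<partial>\<kappa> \<omega>) = ennreal (G g (\<eta>t \<omega>))" if w: "\<omega> \<in> space P" for \<omega>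
  proof -
    let ?e = "\<eta>t \<omega>"
    have e: "?e > 0" using eta_pos[OF w] .
    have "(\<integral>\<^sup>+x. ennreal (g x) \<partial>\<kappa> \<omega>) = (\<integral>\<^sup>+x. ennreal (ef_density \<mu> h T ?e x) * ennreal (g x) \<partial>\<mu>)"
      unfolding \<kappa>_def by (rule nn_integral_density) auto
    also have "\<dots> = (\<integral>\<^sup>+x. ennreal (g x * (h x * exp (?e * T x)) / Z ?e) \<partial>\<mu>)"
      using Z_pos[OF e] h_nonneg gnn
      by (intro nn_integral_cong) (auto simp: p_eq[OF e] ennreal_mult'[symmetric] field_simps)
    also have "\<dots> = ennreal (\<integral>x. g x * (h x * exp (?e * T x)) / Z ?e \<partial>\<mu>)"
      using gi[OF e] Z_pos[OF e] h_nonneg gnn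
      by (intro nn_integral_eq_integral) (auto intro!: AE_I2)
    also have "\<dots> = ennreal (G g ?e)" by (simp add: G_def)
    finally show ?thesis .
  qed
  have Gm: "(\<lambda>\<omega>. G g (\<eta>t \<omega>)) \<in> borel_measurable P"
  proof -
    have "(\<lambda>\<omega>. \<integral>\<^sup>+x. ennreal (g x) \<partial>\<kappa> \<omega>) \<in> borel_measurable P"
      using measurable_compose[OF \<kappa>_meas nn_integral_measurable_subprob_algebra[of "\<lambda>x. ennreal (g x)" \<mu>]]
      by (simp add: comp_def)
    then have "(\<lambda>\<omega>. enn2real (\<integral>\<^sup>+x. ennreal (g x) \<partial>\<kappa> \<omega>)) \<in> borel_measurable P" by measurable
    then show ?thesis
      by (subst measurable_cong[where g="\<lambda>\<omega>. enn2real (\<integral>\<^sup>+x. ennreal (g x) \<partial>\<kappa> \<omega>)"])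
         (auto simp: inner Gnn eta_pos)
  qed
  have eq: "(\<integral>\<^sup>+\<omega>. ennreal (g (Y \<omega>)) \<partial>P) = (\<integral>\<^sup>+\<omega>. ennreal (G g (\<eta>t \<omega>)) \<partial>P)"
    using nn_mix[of "\<lambda>x. ennreal (g x)"] by (auto intro!: nn_integral_cong simp: inner)
  have lhs: "(\<integral>\<^sup>+\<omega>. ennreal (g (Y \<omega>)) \<partial>P) = ennreal (\<integral>\<omega>. g (Y \<omega>) \<partial>P)"
    using gY gnn measurable_space[OF Y_meas] by (intro nn_integral_eq_integral) (auto intro!: AE_I2)
  show Gi: "integrable P (\<lambda>\<omega>. G g (\<eta>t \<omega>))"
    using Gm by (rule integrableI_nonneg) (auto intro!: AE_I2 Gnn eta_pos simp: eq[symmetric] lhs)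
  have rhs: "(\<integral>\<^sup>+\<omega>. ennreal (G g (\<eta>t \<omega>)) \<partial>P) = ennreal (\<integral>\<omega>. G g (\<eta>t \<omega>) \<partial>P)"
    using Gi by (intro nn_integral_eq_integral) (auto intro!: AE_I2 Gnn eta_pos)
  have "ennreal (\<integral>\<omega>. g (Y \<omega>) \<partial>P) = ennreal (\<integral>\<omega>. G g (\<eta>t \<omega>) \<partial>P)"
    using eq lhs rhs by simp
  moreover have "(\<integral>\<omega>. g (Y \<omega>) \<partial>P) \<ge> 0"
    using gnn measurable_space[OF Y_meas] by (intro integral_nonneg_AE AE_I2) auto
  moreover have "(\<integral>\<omega>. G g (\<eta>t \<omega>) \<partial>P) \<ge> 0"
    by (intro integral_nonneg_AE AE_I2 Gnn eta_pos)
  ultimately show "(\<integral>\<omega>. g (Y \<omega>) \<partial>P) = (\<integral>\<omega>. G g (\<eta>t \<omega>) \<partial>P)" by simp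
qed

lemma ET: assumes T_int: "integrable P (\<lambda>\<omega>. T (Y \<omega>))"
  shows "integrable P (\<lambda>\<omega>. M (\<eta>t \<omega>) / Z (\<eta>t \<omega>))"
    "(\<integral>\<omega>. T (Y \<omega>) \<partial>P) = (\<integral>\<omega>. M (\<eta>t \<omega>) / Z (\<eta>t \<omega>) \<partial>P)"
proof -
  define Tp where "Tp x = max (T x) 0" for x
  define Tn where "Tn x = max (- T x) 0" for x
  have [measurable]: "Tp \<in> borel_measurable \<mu>" "Tn \<in> borel_measurable \<mu>" unfolding Tp_def Tn_def by measurable
  have TpY: "integrable P (\<lambda>\<omega>. Tp (Y \<omega>))" unfolding Tp_def
    by (rule Bochner_Integration.integrable_max[OF T_int integrable_zero])
  have TnY: "integrable P (\<lambda>\<omega>. Tn (Y \<omega>))" unfolding Tn_def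
    by (rule Bochner_Integration.integrable_max[OF integrable_minus[OF T_int] integrable_zero])
  have gi: "integrable \<mu> (\<lambda>x. g x * (h x * exp (\<eta> * T x)))"
    if e: "\<eta> > 0" and gm: "g \<in> borel_measurable \<mu>" and gb: "\<And>x. \<bar>g x\<bar> \<le> \<bar>T x\<bar>" for g \<eta>
  proof (rule Bochner_Integration.integrable_bound[OF intT[OF e]])
    show "(\<lambda>x. g x * (h x * exp (\<eta> * T x))) \<in> borel_measurable \<mu>" using gm by measurable
    show "AE x in \<mu>. norm (g x * (h x * exp (\<eta> * T x))) \<le> norm (T x * (h x * exp (\<eta> * T x)))"
    proof (rule AE_I2)
      fix x assume x: "x \<in> space \<mu>"
      have "\<bar>g x\<bar> * \<bar>h x * exp (\<eta> * T x)\<bar> \<le> \<bar>T x\<bar> * \<bar>h x * exp (\<eta> * T x)\<bar>"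
        using gb[of x] by (rule mult_right_mono) simp
      then show "norm (g x * (h x * exp (\<eta> * T x))) \<le> norm (T x * (h x * exp (\<eta> * T x)))"
        by (simp add: abs_mult)
    qed
  qed
  have gip: "integrable \<mu> (\<lambda>x. Tp x * (h x * exp (\<eta> * T x)))" if "\<eta> > 0" for \<eta>
    using gi[OF that] by (auto simp: Tp_def)
  have gin: "integrable \<mu> (\<lambda>x. Tn x * (h x * exp (\<eta> * T x)))" if "\<eta> > 0" for \<eta>
    using gi[OF that] by (auto simp: Tn_def)
  note mp = mix_int[of Tp, OF _ _ TpY gip] and mn = mix_int[of Tn, OF _ _ TnY gin]
  have mp1: "integrable P (\<lambda>\<omega>. G Tp (\<eta>t \<omega>))" "(\<integral>\<omega>. Tp (Y \<omega>) \<partial>P) = (\<integral>\<omega>. G Tp (\<eta>t \<omega>) \<partial>P)"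
    using mp by (auto simp: Tp_def)
  have mn1: "integrable P (\<lambda>\<omega>. G Tn (\<eta>t \<omega>))" "(\<integral>\<omega>. Tn (Y \<omega>) \<partial>P) = (\<integral>\<omega>. G Tn (\<eta>t \<omega>) \<partial>P)"
    using mn by (auto simp: Tn_def)
  have Gd: "G Tp \<eta> - G Tn \<eta> = M \<eta> / Z \<eta>" if e: "\<eta> > 0" for \<eta>
  proof -
    have "G Tp \<eta> - G Tn \<eta> = (\<integral>x. Tp x * (h x * exp (\<eta> * T x)) - Tn x * (h x * exp (\<eta> * T x)) \<partial>\<mu>) / Z \<eta>"
      unfolding G_def using gip[OF e] gin[OF e] by (simp add: diff_divide_distrib)
    also have "\<dots> = M \<eta> / Z \<eta>" unfolding M_def
      by (intro arg_cong[where f="\<lambda>u. u / Z \<eta>"] Bochner_Integration.integral_cong)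
         (auto simp: Tp_def Tn_def algebra_simps max_def)
    finally show ?thesis .
  qed
  have cong: "\<And>\<omega>. \<omega> \<in> space P \<Longrightarrow> G Tp (\<eta>t \<omega>) - G Tn (\<eta>t \<omega>) = M (\<eta>t \<omega>) / Z (\<eta>t \<omega>)"
    using Gd eta_pos by blast
  have di: "integrable P (\<lambda>\<omega>. G Tp (\<eta>t \<omega>) - G Tn (\<eta>t \<omega>))" using mp1(1) mn1(1) by auto
  show "integrable P (\<lambda>\<omega>. M (\<eta>t \<omega>) / Z (\<eta>t \<omega>))"
    using di by (subst Bochner_Integration.integrable_cong[OF refl cong[symmetric]]) auto
  have "(\<integral>\<omega>. T (Y \<omega>) \<partial>P) = (\<integral>\<omega>. Tp (Y \<omega>) - Tn (Y \<omega>) \<partial>P)"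
    by (intro Bochner_Integration.integral_cong) (auto simp: Tp_def Tn_def max_def)
  also have "\<dots> = (\<integral>\<omega>. Tp (Y \<omega>) \<partial>P) - (\<integral>\<omega>. Tn (Y \<omega>) \<partial>P)" using TpY TnY by simp
  also have "\<dots> = (\<integral>\<omega>. G Tp (\<eta>t \<omega>) \<partial>P) - (\<integral>\<omega>. G Tn (\<eta>t \<omega>) \<partial>P)" using mp1 mn1 by simp
  also have "\<dots> = (\<integral>\<omega>. G Tp (\<eta>t \<omega>) - G Tn (\<eta>t \<omega>) \<partial>P)" using mp1 mn1 by simp
  also have "\<dots> = (\<integral>\<omega>. M (\<eta>t \<omega>) / Z (\<eta>t \<omega>) \<partial>P)"
    by (intro Bochner_Integration.integral_cong[OF refl cong])
  finally show "(\<integral>\<omega>. T (Y \<omega>) \<partial>P) = (\<integral>\<omega>. M (\<eta>t \<omega>) / Z (\<eta>t \<omega>) \<partial>P)" .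
qed

lemma int_pos:
  fixes f :: "'w \<Rightarrow> real"
  assumes f: "integrable P f" and pos: "\<And>\<omega>. \<omega> \<in> space P \<Longrightarrow> f \<omega> > 0"
  shows "(\<integral>\<omega>. f \<omega> \<partial>P) > 0"
proof -
  have nn: "AE \<omega> in P. 0 \<le> f \<omega>" using pos by (auto intro!: AE_I2 simp: less_imp_le)
  have "(\<integral>\<omega>. f \<omega> \<partial>P) \<ge> 0" using nn by (rule integral_nonneg_AE)
  moreover have "(\<integral>\<omega>. f \<omega> \<partial>P) \<noteq> 0"
  proof
    assume "(\<integral>\<omega>. f \<omega> \<partial>P) = 0"
    then have "AE \<omega> in P. f \<omega> = 0" using integral_nonneg_eq_0_iff_AE[OF f nn] by simp
    moreover have "AE \<omega> in P. \<omega> \<in> space P" by (rule AE_space)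
    ultimately have "AE \<omega> in P. False" by eventually_elim (auto dest: pos)
    then show False using P.AE_False by simp
  qed
  ultimately show ?thesis by simp
qed

lemma main:
  assumes T_int: "integrable P (\<lambda>\<omega>. T (Y \<omega>))"
    and logh_int: "integrable P (\<lambda>\<omega>. \<bar>ln (h (Y \<omega>))\<bar>)"
  shows "\<exists>\<eta>s>0.
           deriv (ef_A \<mu> h T) \<eta>s = (\<integral>\<omega>. deriv (ef_A \<mu> h T) (\<eta>t \<omega>) \<partial>P)
         \<and> (\<forall>\<eta>>0. deriv (ef_A \<mu> h T) \<eta> = (\<integral>\<omega>. deriv (ef_A \<mu> h T) (\<eta>t \<omega>) \<partial>P) \<longrightarrow> \<eta> = \<eta>s)
         \<and> (\<forall>\<eta>>0. integrable P (\<lambda>\<omega>. log_loss (ef_density \<mu> h T \<eta>) (Y \<omega>)))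
         \<and> (\<forall>\<eta>>0. \<eta> \<noteq> \<eta>s \<longrightarrow>
              (\<integral>\<omega>. log_loss (ef_density \<mu> h T \<eta>s) (Y \<omega>) \<partial>P)
              < (\<integral>\<omega>. log_loss (ef_density \<mu> h T \<eta>) (Y \<omega>) \<partial>P))"
proof -
  define m where "m \<eta> = M \<eta> / Z \<eta>" for \<eta>
  define c where "c = (\<integral>\<omega>. m (\<eta>t \<omega>) \<partial>P)"
  have dA: "\<And>\<eta>. \<eta> > 0 \<Longrightarrow> deriv (ef_A \<mu> h T) \<eta> = m \<eta>" using deriv_A by (simp add: m_def)
  have DA: "\<And>\<eta>. \<eta> > 0 \<Longrightarrow> (ef_A \<mu> h T has_real_derivative m \<eta>) (at \<eta>)" using A_deriv by (simp add: m_def)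
  have mint: "integrable P (\<lambda>\<omega>. m (\<eta>t \<omega>))" using ET(1)[OF T_int] by (simp add: m_def)
  have ETc: "(\<integral>\<omega>. T (Y \<omega>) \<partial>P) = c" using ET(2)[OF T_int] by (simp add: m_def c_def)
  have cD: "(\<integral>\<omega>. deriv (ef_A \<mu> h T) (\<eta>t \<omega>) \<partial>P) = c"
    unfolding c_def by (intro Bochner_Integration.integral_cong) (auto simp: dA eta_pos)
  have sub: "\<And>a b. a > 0 \<Longrightarrow> b > 0 \<Longrightarrow> a \<noteq> b \<Longrightarrow> ef_A \<mu> h T b > ef_A \<mu> h T a + (b - a) * m a"
    using subgrad by (simp add: m_def)
  have mono: "m a < m b" if ab: "0 < a" "a < b" for a b
  proof -
    have 1: "ef_A \<mu> h T b > ef_A \<mu> h T a + (b - a) * m a" using sub ab by simp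
    have 2: "ef_A \<mu> h T a > ef_A \<mu> h T b + (a - b) * m b" using sub ab by simp
    have 3: "(b - a) * (m a - m b) = (b - a) * m a + (a - b) * m b" by (simp add: algebra_simps)
    have "(b - a) * (m a - m b) < 0" using 1 2 3 by linarith
    then show "m a < m b" using ab by (simp add: mult_less_0_iff)
  qed
  have "\<exists>\<eta>1>0. m \<eta>1 < c"
  proof (rule ccontr)
    assume "\<not> ?thesis"
    then have ge: "\<And>\<eta>. \<eta> > 0 \<Longrightarrow> m \<eta> \<ge> c" by force
    have "(\<integral>\<omega>. m (\<eta>t \<omega>) - c \<partial>P) > 0"
    proof (rule int_pos)
      show "integrable P (\<lambda>\<omega>. m (\<eta>t \<omega>) - c)" using mint by simp
      fix \<omega> assume "\<omega> \<in> space P"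
      then have p: "\<eta>t \<omega> > 0" by (rule eta_pos)
      have "m (\<eta>t \<omega> / 2) < m (\<eta>t \<omega>)" using p by (intro mono) auto
      moreover have "m (\<eta>t \<omega> / 2) \<ge> c" using p ge by simp
      ultimately show "m (\<eta>t \<omega>) - c > 0" by simp
    qed
    moreover have "(\<integral>\<omega>. m (\<eta>t \<omega>) - c \<partial>P) = 0" using mint by (simp add: c_def P.prob_space)
    ultimately show False by simp
  qed
  then obtain \<eta>1 where e1: "\<eta>1 > 0" "m \<eta>1 < c" by blast
  have "\<exists>\<eta>2>0. m \<eta>2 > c"
  proof (rule ccontr)
    assume "\<not> ?thesis"
    then have ge: "\<And>\<eta>. \<eta> > 0 \<Longrightarrow> m \<eta> \<le> c" by force
    have "(\<integral>\<omega>. c - m (\<eta>t \<omega>) \<partial>P) > 0"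
    proof (rule int_pos)
      show "integrable P (\<lambda>\<omega>. c - m (\<eta>t \<omega>))" using mint by simp
      fix \<omega> assume "\<omega> \<in> space P"
      then have p: "\<eta>t \<omega> > 0" by (rule eta_pos)
      have "m (\<eta>t \<omega>) < m (2 * \<eta>t \<omega>)" using p by (intro mono) auto
      moreover have "m (2 * \<eta>t \<omega>) \<le> c" using p ge by simp
      ultimately show "c - m (\<eta>t \<omega>) > 0" by simp
    qed
    moreover have "(\<integral>\<omega>. c - m (\<eta>t \<omega>) \<partial>P) = 0" using mint by (simp add: c_def P.prob_space)
    ultimately show False by simp
  qed
  then obtain \<eta>2 where e2: "\<eta>2 > 0" "m \<eta>2 > c" by blast
  have e12: "\<eta>1 < \<eta>2"
  proof (rule ccontr)
    assume "\<not> \<eta>1 < \<eta>2"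
    then have "\<eta>2 < \<eta>1 \<or> \<eta>2 = \<eta>1" by auto
    then show False using mono[of \<eta>2 \<eta>1] e1 e2 by auto
  qed
  define f where "f \<eta> = ef_A \<mu> h T \<eta> - c * \<eta>" for \<eta>
  have Df: "(f has_real_derivative m \<eta> - c) (at \<eta>)" if "\<eta> > 0" for \<eta>
    unfolding f_def using DERIV_diff[OF DA[OF that] DERIV_cmult_Id[of c]] by simp
  have contf: "continuous_on {\<eta>1..\<eta>2} f"
    using e1 by (intro continuous_at_imp_continuous_on ballI DERIV_isCont[OF Df]) auto
  obtain es where es: "es \<in> {\<eta>1..\<eta>2}" "\<And>y. y \<in> {\<eta>1..\<eta>2} \<Longrightarrow> f es \<le> f y"
    using continuous_attains_inf[OF compact_Icc _ contf] e12 by auto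
  have es1: "es \<noteq> \<eta>1"
  proof
    assume eq: "es = \<eta>1"
    obtain d where d: "d > 0" "\<And>hh. hh > 0 \<Longrightarrow> hh < d \<Longrightarrow> f \<eta>1 > f (\<eta>1 + hh)"
      using DERIV_neg_dec_right[OF Df[OF e1(1)]] e1 by auto
    define hh where "hh = min (d / 2) (\<eta>2 - \<eta>1)"
    have hh: "hh > 0" "hh < d" using d e12 by (auto simp: hh_def)
    have "f (\<eta>1 + hh) < f \<eta>1" using d(2)[OF hh] .
    moreover have "f es \<le> f (\<eta>1 + hh)" using hh e12 by (intro es(2)) (auto simp: hh_def)
    ultimately show False using eq by simp
  qed
  have es2: "es \<noteq> \<eta>2"
  proof
    assume eq: "es = \<eta>2"
    obtain d where d: "d > 0" "\<And>hh. hh > 0 \<Longrightarrow> hh < d \<Longrightarrow> f (\<eta>2 - hh) < f \<eta>2"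
      using DERIV_pos_inc_left[OF Df[OF e2(1)]] e2 by auto
    define hh where "hh = min (d / 2) (\<eta>2 - \<eta>1)"
    have hh: "hh > 0" "hh < d" using d e12 by (auto simp: hh_def)
    have "f (\<eta>2 - hh) < f \<eta>2" using d(2)[OF hh] .
    moreover have "f es \<le> f (\<eta>2 - hh)" using hh e12 by (intro es(2)) (auto simp: hh_def)
    ultimately show False using eq by simp
  qed
  have esi: "\<eta>1 < es" "es < \<eta>2" using es(1) es1 es2 by auto
  have esp: "es > 0" using esi e1 by simp
  have "m es - c = 0"
  proof (rule DERIV_local_min[OF Df[OF esp]])
    show "0 < min (es - \<eta>1) (\<eta>2 - es)" using esi by simp
    show "\<forall>y. \<bar>es - y\<bar> < min (es - \<eta>1) (\<eta>2 - es) \<longrightarrow> f es \<le> f y"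
      by (auto intro!: es(2))
  qed
  then have mes: "m es = c" by simp
  have Lm: "(\<lambda>\<omega>. ln (h (Y \<omega>))) \<in> borel_measurable P" by measurable
  have Lint: "integrable P (\<lambda>\<omega>. ln (h (Y \<omega>)))" using logh_int integrable_abs_iff[OF Lm] by simp
  have loss_ae: "AE \<omega> in P. log_loss (ef_density \<mu> h T \<eta>) (Y \<omega>)
      = - ln (h (Y \<omega>)) - \<eta> * T (Y \<omega>) + ef_A \<mu> h T \<eta>" for \<eta>
    using AE_hY by eventually_elim (simp add: log_loss_def ef_density_def ln_mult)
  have lossm: "(\<lambda>\<omega>. log_loss (ef_density \<mu> h T \<eta>) (Y \<omega>)) \<in> borel_measurable P" for \<eta>
    unfolding log_loss_def by measurable
  have rm: "(\<lambda>\<omega>. - ln (h (Y \<omega>)) - \<eta> * T (Y \<omega>) + ef_A \<mu> h T \<eta>) \<in> borel_measurable P" for \<eta>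
    by measurable
  have rint: "integrable P (\<lambda>\<omega>. - ln (h (Y \<omega>)) - \<eta> * T (Y \<omega>) + ef_A \<mu> h T \<eta>)" for \<eta>
    using Lint T_int by auto
  have lint: "integrable P (\<lambda>\<omega>. log_loss (ef_density \<mu> h T \<eta>) (Y \<omega>))" for \<eta>
    using integrable_cong_AE[OF lossm rm loss_ae] rint by simp
  have lossI: "(\<integral>\<omega>. log_loss (ef_density \<mu> h T \<eta>) (Y \<omega>) \<partial>P)
      = ef_A \<mu> h T \<eta> - \<eta> * c - (\<integral>\<omega>. ln (h (Y \<omega>)) \<partial>P)" for \<eta>
  proof -
    have "(\<integral>\<omega>. log_loss (ef_density \<mu> h T \<eta>) (Y \<omega>) \<partial>P)
        = (\<integral>\<omega>. - ln (h (Y \<omega>)) - \<eta> * T (Y \<omega>) + ef_A \<mu> h T \<eta> \<partial>P)"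
      by (rule integral_cong_AE[OF lossm rm loss_ae])
    also have "\<dots> = - (\<integral>\<omega>. ln (h (Y \<omega>)) \<partial>P) - \<eta> * (\<integral>\<omega>. T (Y \<omega>) \<partial>P) + ef_A \<mu> h T \<eta>"
      using Lint T_int by (simp add: P.prob_space)
    finally show ?thesis using ETc by simp
  qed
  show ?thesis
  proof (intro exI[of _ es] conjI allI impI)
    show "es > 0" by (rule esp)
    show "deriv (ef_A \<mu> h T) es = (\<integral>\<omega>. deriv (ef_A \<mu> h T) (\<eta>t \<omega>) \<partial>P)"
      using dA[OF esp] mes cD by simp
    fix \<eta> :: real
    {
      assume p: "\<eta> > 0" and eq: "deriv (ef_A \<mu> h T) \<eta> = (\<integral>\<omega>. deriv (ef_A \<mu> h T) (\<eta>t \<omega>) \<partial>P)"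
      then have "m \<eta> = m es" using dA[OF p] cD mes by simp
      then show "\<eta> = es" using mono[of \<eta> es] mono[of es \<eta>] p esp
        by (cases "\<eta> < es"; cases "es < \<eta>") auto
    }
    {
      assume "\<eta> > 0"
      show "integrable P (\<lambda>\<omega>. log_loss (ef_density \<mu> h T \<eta>) (Y \<omega>))" by (rule lint)
    }
    {
      assume p: "\<eta> > 0" and ne: "\<eta> \<noteq> es"
      have s: "ef_A \<mu> h T \<eta> > ef_A \<mu> h T es + (\<eta> - es) * c"
        using sub[OF esp p] ne mes by auto
      have "(\<eta> - es) * c = \<eta> * c - es * c" by (simp add: algebra_simps)
      then show "(\<integral>\<omega>. log_loss (ef_density \<mu> h T es) (Y \<omega>) \<partial>P)
              < (\<integral>\<omega>. log_loss (ef_density \<mu> h T \<eta>) (Y \<omega>) \<partial>P)"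
        unfolding lossI using s by linarith
    }
  qed
qed

end


theorem theorem5:
  fixes \<mu> :: "'a measure" and h T :: "'a \<Rightarrow> real"
    and P :: "'w measure" and \<eta>test :: "'w \<Rightarrow> real" and Y :: "'w \<Rightarrow> 'a"
  assumes h_meas: "h \<in> borel_measurable \<mu>" and h_nonneg: "\<And>x. x \<in> space \<mu> \<Longrightarrow> h x \<ge> 0"
    and T_meas: "T \<in> borel_measurable \<mu>"
    and minimal: "minimal_ef \<mu> h T"
    and param: "{0<..} \<subseteq> interior (natural_param_space \<mu> h T)"
    and P: "prob_space P"
    and eta_meas: "\<eta>test \<in> borel_measurable P"
    and eta_pos: "\<And>\<omega>. \<omega> \<in> space P \<Longrightarrow> \<eta>test \<omega> > 0"
    and Y_meas: "Y \<in> measurable P \<mu>"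
    and cond: "\<And>S B. S \<in> sets borel \<Longrightarrow> B \<in> sets \<mu> \<Longrightarrow>
        emeasure P {\<omega> \<in> space P. \<eta>test \<omega> \<in> S \<and> Y \<omega> \<in> B}
        = (\<integral>\<^sup>+\<omega>. indicator S (\<eta>test \<omega>) *
              emeasure (density \<mu> (\<lambda>x. ennreal (ef_density \<mu> h T (\<eta>test \<omega>) x))) B \<partial>P)"
    and T_int: "integrable P (\<lambda>\<omega>. T (Y \<omega>))"
    and logh_int: "integrable P (\<lambda>\<omega>. \<bar>ln (h (Y \<omega>))\<bar>)"
  shows "\<exists>\<eta>s>0.
           deriv (ef_A \<mu> h T) \<eta>s = (\<integral>\<omega>. deriv (ef_A \<mu> h T) (\<eta>test \<omega>) \<partial>P)
         \<and> (\<forall>\<eta>>0. deriv (ef_A \<mu> h T) \<eta> = (\<integral>\<omega>. deriv (ef_A \<mu> h T) (\<eta>test \<omega>) \<partial>P) \<longrightarrow> \<eta> = \<eta>s)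
         \<and> (\<forall>\<eta>>0. integrable P (\<lambda>\<omega>. log_loss (ef_density \<mu> h T \<eta>) (Y \<omega>)))
         \<and> (\<forall>\<eta>>0. \<eta> \<noteq> \<eta>s \<longrightarrow>
              (\<integral>\<omega>. log_loss (ef_density \<mu> h T \<eta>s) (Y \<omega>) \<partial>P)
              < (\<integral>\<omega>. log_loss (ef_density \<mu> h T \<eta>) (Y \<omega>) \<partial>P))"
proof -
  have intg: "integrable \<mu> (\<lambda>x. h x * exp (\<eta> * T x))" if "\<eta> > 0" for \<eta>
  proof -
    have "\<eta> \<in> natural_param_space \<mu> h T" using param that interior_subset by blast
    then show ?thesis by (simp add: natural_param_space_def)
  qed
  have condY: "emeasure P (Y -` B \<inter> space P)
        = (\<integral>\<^sup>+\<omega>. emeasure (density \<mu> (\<lambda>x. ennreal (ef_density \<mu> h T (\<eta>test \<omega>) x))) B \<partial>P)"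
    if B: "B \<in> sets \<mu>" for B
  proof -
    have "Y -` B \<inter> space P = {\<omega> \<in> space P. \<eta>test \<omega> \<in> UNIV \<and> Y \<omega> \<in> B}" by auto
    then show ?thesis using cond[of UNIV B] B by simp
  qed
  interpret E: ef_mix \<mu> h T P \<eta>test Y
  proof (rule ef_mix.intro[OF ef.intro ef_mix_axioms.intro])
    show "h \<in> borel_measurable \<mu>" by (rule h_meas)
    show "\<And>x. x \<in> space \<mu> \<Longrightarrow> h x \<ge> 0" by (rule h_nonneg)
    show "T \<in> borel_measurable \<mu>" by (rule T_meas)
    show "minimal_ef \<mu> h T" by (rule minimal)
    show "\<And>\<eta>. \<eta> > 0 \<Longrightarrow> integrable \<mu> (\<lambda>x. h x * exp (\<eta> * T x))" by (rule intg)
    show "prob_space P" by (rule P)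
    show "\<eta>test \<in> borel_measurable P" by (rule eta_meas)
    show "\<And>\<omega>. \<omega> \<in> space P \<Longrightarrow> \<eta>test \<omega> > 0" by (rule eta_pos)
    show "Y \<in> measurable P \<mu>" by (rule Y_meas)
    show "\<And>B. B \<in> sets \<mu> \<Longrightarrow> emeasure P (Y -` B \<inter> space P)
        = (\<integral>\<^sup>+\<omega>. emeasure (density \<mu> (\<lambda>x. ennreal (ef_density \<mu> h T (\<eta>test \<omega>) x))) B \<partial>P)"
      by (rule condY)
  qed
  show ?thesis by (rule E.main[OF T_int logh_int])
qed

end
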